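(* Let $(\mathcal H,\mathfrak A_0)$ be a Hilbert quasi *-algebra with unit $e$. Then the set $\mathcal H_b$ of bounded elements coincides with the set of universal multipliers of $\mathcal H$, i.e. $\mathcal H_b=\{\xi\in\mathcal H:\ \eta\square\xi \text{ is defined for every }\eta\in\mathcal H\}=\{\xi\in\mathcal H:\ \xi\square\eta\text{ is defined for every }\eta\in\mathcal H\}$.
   Context: A Hilbert algebra is a *-algebra $\mathfrak A_0$ with an inner product $\langle\cdot,\cdot\rangle$ such that (i) for each $x$, $y\mapsto xy$ is continuous for the inner product norm; (ii) $\langle xy,z\rangle=\langle y,x^*z\rangle$ for all $x,y,z$; (iii) $\langle x,y\rangle=\langle y^*,x^*\rangle$ for all $x,y$; (iv) the linear span of $\{xy:x,y\in\mathfrak A_0\}$ is dense in $\mathfrak A_0$. Let $\mathcal H$ be the Hilbert space completion of $\mathfrak A_0$; the involution extends isometrically to $\mathcal H$, and the products $\xi x$, $x\xi$ for $\xi\in\mathcal H$, $x\in\mathfrak A_0$ are defined by continuity. It is assumed that (A): if $\xi\in\mathcal H$ and $\xi x=0$ for all $x\in\mathfrak A_0$ then $\xi=0$. With these operations $(\mathcal H,\mathfrak A_0)$ is a Banach quasi *-algebra, called a Hilbert quasi *-algebra. A unit is $e\in\mathfrak A_0$ with $\xi e=e\xi=\xi$ for all $\xi\in\mathcal H$. For $\xi\in\mathcal H$, $L_\xi$, $R_\xi$ are the operators with domain $\mathfrak A_0$ given by $L_\xi x=\xi x$, $R_\xi x=x\xi$. $\xi$ is a bounded element if $L_\xi$ is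 bounded on $\mathfrak A_0$ (equivalently, $R_\xi$ is bounded). $\mathcal H_b$ is the set of bounded elements. Weak multiplication: $\xi$ is a left multiplier of $\eta$ if there is $\zeta\in\mathcal H$ with $\langle\eta x,\xi^*y\rangle=\langle\zeta x,y\rangle$ for all $x,y\in\mathfrak A_0$; then $\xi\square\eta:=\zeta$. *)

theory Defs
  imports "HOL-Analysis.Analysis"
begin

text \<open>
  The Hilbert space H is modelled by a type 'h of class banach (complete normed space
  over the reals), equipped with a complex scalar multiplication compatible with the
  real one, and a complex inner product (linear in the first, conjugate-linear in the
  second argument) inducing the norm. The whole type is H.
  The multiplication mult is a total function, but only the values mult xi x and mult x xi
  with x in A0 are constrained (and meaningful).
\<close>

record 'h hqa_data =
  scC   :: "complex \<Rightarrow> 'h \<Rightarrow> 'h"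
  ip    :: "'h \<Rightarrow> 'h \<Rightarrow> complex"
  inv   :: "'h \<Rightarrow> 'h"
  mult  :: "'h \<Rightarrow> 'h \<Rightarrow> 'h"
  alg0  :: "'h set"

definition complex_hilbert_space :: "('h::banach) hqa_data \<Rightarrow> bool" where
  "complex_hilbert_space S \<longleftrightarrow>
     (\<forall>a b x. scC S (a + b) x = scC S a x + scC S b x) \<and>
     (\<forall>a x y. scC S a (x + y) = scC S a x + scC S a y) \<and>
     (\<forall>a b x. scC S (a * b) x = scC S a (scC S b x)) \<and>
     (\<forall>x. scC S 1 x = x) \<and>
     (\<forall>r x. scC S (complex_of_real r) x = scaleR r x) \<and>
     (\<forall>x y z. ip S (x + y) z = ip S x z + ip S y z) \<and>
     (\<forall>a x y. ip S (scC S a x) y = a * ip S x y) \<and>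
     (\<forall>x y. ip S y x = cnj (ip S x y)) \<and>
     (\<forall>x. 0 \<le> Re (ip S x x)) \<and>
     (\<forall>x. norm x = sqrt (Re (ip S x x)))"

text \<open>Hilbert quasi *-algebra (H, A0) obtained from a Hilbert algebra A0 with completion H,
  satisfying condition (A).\<close>

definition hilbert_quasi_star_algebra :: "('h::banach) hqa_data \<Rightarrow> bool" where
  "hilbert_quasi_star_algebra S \<longleftrightarrow>
     complex_hilbert_space S \<and>
     \<comment> \<open>A0 is a complex *-algebra\<close>
     0 \<in> alg0 S \<and>
     (\<forall>x\<in>alg0 S. \<forall>y\<in>alg0 S. x + y \<in> alg0 S) \<and>
     (\<forall>a. \<forall>x\<in>alg0 S. scC S a x \<in> alg0 S) \<and>
     (\<forall>x\<in>alg0 S. \<forall>y\<in>alg0 S. mult S x y \<in> alg0 S) \<and>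
     (\<forall>x\<in>alg0 S. \<forall>y\<in>alg0 S. \<forall>z\<in>alg0 S. mult S (mult S x y) z = mult S x (mult S y z)) \<and>
     (\<forall>x\<in>alg0 S. inv S x \<in> alg0 S) \<and>
     (\<forall>x\<in>alg0 S. \<forall>y\<in>alg0 S. inv S (mult S x y) = mult S (inv S y) (inv S x)) \<and>
     \<comment> \<open>A0 is dense in H (H is its completion)\<close>
     closure (alg0 S) = UNIV \<and>
     \<comment> \<open>the involution on H: isometric conjugate-linear involutive extension\<close>
     (\<forall>\<xi> \<eta>. inv S (\<xi> + \<eta>) = inv S \<xi> + inv S \<eta>) \<and>
     (\<forall>a \<xi>. inv S (scC S a \<xi>) = scC S (cnj a) (inv S \<xi>)) \<and>
     (\<forall>\<xi>. inv S (inv S \<xi>) = \<xi>) \<and>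
     (\<forall>\<xi>. norm (inv S \<xi>) = norm \<xi>) \<and>
     \<comment> \<open>products with an element of A0 on either side: bounded (bi)linear maps on H,
         i.e. the extensions by continuity of the products on A0\<close>
     (\<forall>x\<in>alg0 S. \<forall>\<xi> \<eta>. mult S (\<xi> + \<eta>) x = mult S \<xi> x + mult S \<eta> x) \<and>
     (\<forall>x\<in>alg0 S. \<forall>\<xi> \<eta>. mult S x (\<xi> + \<eta>) = mult S x \<xi> + mult S x \<eta>) \<and>
     (\<forall>x\<in>alg0 S. \<forall>a \<xi>. mult S (scC S a \<xi>) x = scC S a (mult S \<xi> x)) \<and>
     (\<forall>x\<in>alg0 S. \<forall>a \<xi>. mult S x (scC S a \<xi>) = scC S a (mult S x \<xi>)) \<and>
     (\<forall>x\<in>alg0 S. \<exists>C. \<forall>\<xi>. norm (mult S \<xi> x) \<le> C * norm \<xi>) \<and>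
     (\<forall>x\<in>alg0 S. \<exists>C. \<forall>\<xi>. norm (mult S x \<xi>) \<le> C * norm \<xi>) \<and>
     \<comment> \<open>Hilbert algebra axioms (i)-(iv)\<close>
     (\<forall>x\<in>alg0 S. \<exists>C. \<forall>y\<in>alg0 S. norm (mult S x y) \<le> C * norm y) \<and>
     (\<forall>x\<in>alg0 S. \<forall>y\<in>alg0 S. \<forall>z\<in>alg0 S.
        ip S (mult S x y) z = ip S y (mult S (inv S x) z)) \<and>
     (\<forall>x\<in>alg0 S. \<forall>y\<in>alg0 S. ip S x y = ip S (inv S y) (inv S x)) \<and>
     (\<forall>x\<in>alg0 S. \<forall>\<epsilon>>0. \<exists>(n::nat) c a b. (\<forall>i<n. a i \<in> alg0 S \<and> b i \<in> alg0 S) \<and>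
        norm (x - (\<Sum>i<n. scC S (c i) (mult S (a i) (b i)))) < \<epsilon>) \<and>
     \<comment> \<open>condition (A)\<close>
     (\<forall>\<xi>. (\<forall>x\<in>alg0 S. mult S \<xi> x = 0) \<longrightarrow> \<xi> = 0)"

definition hqa_unit :: "('h::banach) hqa_data \<Rightarrow> 'h \<Rightarrow> bool" where
  "hqa_unit S e \<longleftrightarrow> e \<in> alg0 S \<and> (\<forall>\<xi>. mult S \<xi> e = \<xi> \<and> mult S e \<xi> = \<xi>)"

definition bounded_elements :: "('h::banach) hqa_data \<Rightarrow> 'h set" where
  "bounded_elements S = {\<xi>. \<exists>C. \<forall>x\<in>alg0 S. norm (mult S \<xi> x) \<le> C * norm x}"

text \<open>xi is a left multiplier of eta, i.e. xi \<box> eta is defined.\<close>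
definition left_multiplier :: "('h::banach) hqa_data \<Rightarrow> 'h \<Rightarrow> 'h \<Rightarrow> bool" where
  "left_multiplier S \<xi> \<eta> \<longleftrightarrow>
     (\<exists>\<zeta>. \<forall>x\<in>alg0 S. \<forall>y\<in>alg0 S.
        ip S (mult S \<eta> x) (mult S (inv S \<xi>) y) = ip S (mult S \<zeta> x) y)"

end

theory Submission
  imports Defs
begin


lemma ubp:
  fixes f :: "'i \<Rightarrow> 'a::banach \<Rightarrow> 'b::real_normed_vector"
  assumes bl: "\<And>i. i \<in> J \<Longrightarrow> bounded_linear (f i)"
    and pb: "\<And>x. \<exists>B. \<forall>i\<in>J. norm (f i x) \<le> B"
  shows "\<exists>C. \<forall>i\<in>J. \<forall>x. norm (f i x) \<le> C * norm x"
proof -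
  define F where "F n = {x. \<forall>i\<in>J. norm (f i x) \<le> real n}" for n :: nat
  have Fc: "closed (F n)" for n
  proof -
    have "F n = (\<Inter>i\<in>J. {x. norm (f i x) \<le> real n})" by (auto simp: F_def)
    moreover have "closed {x. norm (f i x) \<le> real n}" if "i \<in> J" for i
      by (rule closed_Collect_le) (intro continuous_on_norm linear_continuous_on bl that, rule continuous_on_const)
    ultimately show ?thesis by (simp add: closed_INT)
  qed
  have cov: "\<Union> (range F) = UNIV"
  proof (rule set_eqI, rule iffI)
    fix x :: 'a
    obtain B where B: "\<forall>i\<in>J. norm (f i x) \<le> B" using pb by blast
    have "B \<le> real (nat \<lceil>B\<rceil>)" by linarith
    then have "x \<in> F (nat \<lceil>B\<rceil>)" using B unfolding F_def by (auto intro: order_trans)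
    then show "x \<in> \<Union> (range F)" by blast
  qed auto
  have "\<exists>n. interior (F n) \<noteq> {}"
  proof (rule ccontr)
    assume "\<not> ?thesis"
    then have "\<And>T. T \<in> range F \<Longrightarrow> closedin euclidean T \<and> euclidean interior_of T = {}"
      using Fc by (auto simp: closed_closedin[symmetric])
    then have "euclidean interior_of \<Union> (range F) = {}"
      by (intro Baire_category_alt completely_metrizable_space_euclidean[THEN disjI1]) auto
    then show False using cov by simp
  qed
  then obtain n x0 where "x0 \<in> interior (F n)" by blast
  then obtain r where r: "r > 0" "ball x0 r \<subseteq> F n" by (auto simp: mem_interior)
  have "norm (f i y) \<le> (4 * real n / r) * norm y" if i: "i \<in> J" for i y
  proof (cases "y = 0")
    case True
    then show ?thesis using bl[OF i] by (simp add: linear_simps)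
  next
    case False
    then have ny: "norm y > 0" by simp
    define z where "z = (r / (2 * norm y)) *\<^sub>R y"
    have nz: "norm z = r / 2" using ny r by (simp add: z_def)
    have "x0 + z \<in> F n" using r nz by (intro subsetD[OF r(2)]) (simp add: dist_norm)
    moreover have "x0 \<in> F n" using r by (intro subsetD[OF r(2)]) simp
    ultimately have b1: "norm (f i (x0 + z)) \<le> real n" "norm (f i x0) \<le> real n"
      using i unfolding F_def by auto
    have "f i z = f i (x0 + z) - f i x0" using bl[OF i] by (simp add: linear_simps)
    then have fz: "norm (f i z) \<le> 2 * real n" using b1 norm_triangle_ineq4[of "f i (x0 + z)" "f i x0"] by simp
    define c where "c = (2 * norm y) / r"
    have yeq: "y = c *\<^sub>R z" using ny r by (simp add: z_def c_def)
    have "f i y = f i (c *\<^sub>R z)" using yeq by simp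
    also have "\<dots> = c *\<^sub>R f i z" using bl[OF i] by (simp add: linear_simps)
    finally have "norm (f i y) = c * norm (f i z)" using r ny by (simp add: c_def)
    also have "\<dots> \<le> c * (2 * real n)" using fz r by (intro mult_left_mono) (auto simp: c_def)
    also have "\<dots> = (4 * real n / r) * norm y" by (simp add: c_def field_simps)
    finally show ?thesis .
  qed
  then show ?thesis by blast
qed




locale hqa =
  fixes S :: "('h::banach) hqa_data" and e :: 'h
  assumes H: "hilbert_quasi_star_algebra S" and U: "hqa_unit S e"
begin

abbreviation "A \<equiv> alg0 S"
abbreviation "M \<equiv> mult S"
abbreviation "I \<equiv> inv S"
abbreviation "P \<equiv> ip S"
abbreviation "sc \<equiv> scC S"

lemma CH: "complex_hilbert_space S" using H[unfolded hilbert_quasi_star_algebra_def, THEN conjunct1] .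

lemma sc_add1: "sc (a + b) x = sc a x + sc b x" using CH[unfolded complex_hilbert_space_def, THEN conjunct1] by blast
lemma sc_add2: "sc a (x + y) = sc a x + sc a y" using CH[unfolded complex_hilbert_space_def, THEN conjunct2, THEN conjunct1] by blast
lemma sc_mult: "sc (a * b) x = sc a (sc b x)" using CH[unfolded complex_hilbert_space_def, THEN conjunct2, THEN conjunct2, THEN conjunct1] by blast
lemma sc_one: "sc 1 x = x" using CH[unfolded complex_hilbert_space_def, THEN conjunct2, THEN conjunct2, THEN conjunct2, THEN conjunct1] by blast
lemma sc_real: "sc (complex_of_real r) x = scaleR r x" using CH[unfolded complex_hilbert_space_def, THEN conjunct2, THEN conjunct2, THEN conjunct2, THEN conjunct2, THEN conjunct1] by blast
lemma ip_add1: "P (x + y) z = P x z + P y z" using CH[unfolded complex_hilbert_space_def, THEN conjunct2, THEN conjunct2, THEN conjunct2, THEN conjunct2, THEN conjunct2, THEN conjunct1] by blast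
lemma ip_sc1: "P (sc a x) y = a * P x y" using CH[unfolded complex_hilbert_space_def, THEN conjunct2, THEN conjunct2, THEN conjunct2, THEN conjunct2, THEN conjunct2, THEN conjunct2, THEN conjunct1] by blast
lemma ip_cnj: "P y x = cnj (P x y)" using CH[unfolded complex_hilbert_space_def, THEN conjunct2, THEN conjunct2, THEN conjunct2, THEN conjunct2, THEN conjunct2, THEN conjunct2, THEN conjunct2, THEN conjunct1] by blast
lemma ip_pos: "0 \<le> Re (P x x)" using CH[unfolded complex_hilbert_space_def, THEN conjunct2, THEN conjunct2, THEN conjunct2, THEN conjunct2, THEN conjunct2, THEN conjunct2, THEN conjunct2, THEN conjunct2, THEN conjunct1] by blast
lemma ip_norm: "norm x = sqrt (Re (P x x))" using CH[unfolded complex_hilbert_space_def, THEN conjunct2, THEN conjunct2, THEN conjunct2, THEN conjunct2, THEN conjunct2, THEN conjunct2, THEN conjunct2, THEN conjunct2, THEN conjunct2] by blast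

lemma A0: "0 \<in> A" using H[unfolded hilbert_quasi_star_algebra_def, THEN conjunct2, THEN conjunct1] by blast
lemma A_add: "x \<in> A \<Longrightarrow> y \<in> A \<Longrightarrow> x + y \<in> A" using H[unfolded hilbert_quasi_star_algebra_def, THEN conjunct2, THEN conjunct2, THEN conjunct1] by blast
lemma A_sc: "x \<in> A \<Longrightarrow> sc a x \<in> A" using H[unfolded hilbert_quasi_star_algebra_def, THEN conjunct2, THEN conjunct2, THEN conjunct2, THEN conjunct1] by blast
lemma A_mult: "x \<in> A \<Longrightarrow> y \<in> A \<Longrightarrow> M x y \<in> A" using H[unfolded hilbert_quasi_star_algebra_def, THEN conjunct2, THEN conjunct2, THEN conjunct2, THEN conjunct2, THEN conjunct1] by blast
lemma A_assoc: "x \<in> A \<Longrightarrow> y \<in> A \<Longrightarrow> z \<in> A \<Longrightarrow> M (M x y) z = M x (M y z)"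
  using H[unfolded hilbert_quasi_star_algebra_def, THEN conjunct2, THEN conjunct2, THEN conjunct2, THEN conjunct2, THEN conjunct2, THEN conjunct1] by blast
lemma A_inv: "x \<in> A \<Longrightarrow> I x \<in> A" using H[unfolded hilbert_quasi_star_algebra_def, THEN conjunct2, THEN conjunct2, THEN conjunct2, THEN conjunct2, THEN conjunct2, THEN conjunct2, THEN conjunct1] by blast
lemma A_inv_mult: "x \<in> A \<Longrightarrow> y \<in> A \<Longrightarrow> I (M x y) = M (I y) (I x)"
  using H[unfolded hilbert_quasi_star_algebra_def, THEN conjunct2, THEN conjunct2, THEN conjunct2, THEN conjunct2, THEN conjunct2, THEN conjunct2, THEN conjunct2, THEN conjunct1] by blast
lemma dense: "closure A = UNIV" using H[unfolded hilbert_quasi_star_algebra_def, THEN conjunct2, THEN conjunct2, THEN conjunct2, THEN conjunct2, THEN conjunct2, THEN conjunct2, THEN conjunct2, THEN conjunct2, THEN conjunct1] by blast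
lemma inv_add: "I (x + y) = I x + I y" using H[unfolded hilbert_quasi_star_algebra_def, THEN conjunct2, THEN conjunct2, THEN conjunct2, THEN conjunct2, THEN conjunct2, THEN conjunct2, THEN conjunct2, THEN conjunct2, THEN conjunct2, THEN conjunct1] by blast
lemma inv_sc: "I (sc a x) = sc (cnj a) (I x)" using H[unfolded hilbert_quasi_star_algebra_def, THEN conjunct2, THEN conjunct2, THEN conjunct2, THEN conjunct2, THEN conjunct2, THEN conjunct2, THEN conjunct2, THEN conjunct2, THEN conjunct2, THEN conjunct2, THEN conjunct1] by blast
lemma inv_inv[simp]: "I (I x) = x" using H[unfolded hilbert_quasi_star_algebra_def, THEN conjunct2, THEN conjunct2, THEN conjunct2, THEN conjunct2, THEN conjunct2, THEN conjunct2, THEN conjunct2, THEN conjunct2, THEN conjunct2, THEN conjunct2, THEN conjunct2, THEN conjunct1] by blast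
lemma inv_norm[simp]: "norm (I x) = norm x" using H[unfolded hilbert_quasi_star_algebra_def, THEN conjunct2, THEN conjunct2, THEN conjunct2, THEN conjunct2, THEN conjunct2, THEN conjunct2, THEN conjunct2, THEN conjunct2, THEN conjunct2, THEN conjunct2, THEN conjunct2, THEN conjunct2, THEN conjunct1] by blast
lemma multR_add: "x \<in> A \<Longrightarrow> M (\<xi> + \<eta>) x = M \<xi> x + M \<eta> x" using H[unfolded hilbert_quasi_star_algebra_def, THEN conjunct2, THEN conjunct2, THEN conjunct2, THEN conjunct2, THEN conjunct2, THEN conjunct2, THEN conjunct2, THEN conjunct2, THEN conjunct2, THEN conjunct2, THEN conjunct2, THEN conjunct2, THEN conjunct2, THEN conjunct1] by blast
lemma multL_add: "x \<in> A \<Longrightarrow> M x (\<xi> + \<eta>) = M x \<xi> + M x \<eta>" using H[unfolded hilbert_quasi_star_algebra_def, THEN conjunct2, THEN conjunct2, THEN conjunct2, THEN conjunct2, THEN conjunct2, THEN conjunct2, THEN conjunct2, THEN conjunct2, THEN conjunct2, THEN conjunct2, THEN conjunct2, THEN conjunct2, THEN conjunct2, THEN conjunct2, THEN conjunct1] by blast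
lemma multR_sc: "x \<in> A \<Longrightarrow> M (sc a \<xi>) x = sc a (M \<xi> x)" using H[unfolded hilbert_quasi_star_algebra_def, THEN conjunct2, THEN conjunct2, THEN conjunct2, THEN conjunct2, THEN conjunct2, THEN conjunct2, THEN conjunct2, THEN conjunct2, THEN conjunct2, THEN conjunct2, THEN conjunct2, THEN conjunct2, THEN conjunct2, THEN conjunct2, THEN conjunct2, THEN conjunct1] by blast
lemma multL_sc: "x \<in> A \<Longrightarrow> M x (sc a \<xi>) = sc a (M x \<xi>)" using H[unfolded hilbert_quasi_star_algebra_def, THEN conjunct2, THEN conjunct2, THEN conjunct2, THEN conjunct2, THEN conjunct2, THEN conjunct2, THEN conjunct2, THEN conjunct2, THEN conjunct2, THEN conjunct2, THEN conjunct2, THEN conjunct2, THEN conjunct2, THEN conjunct2, THEN conjunct2, THEN conjunct2, THEN conjunct1] by blast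
lemma multR_bd: "x \<in> A \<Longrightarrow> \<exists>C. \<forall>\<xi>. norm (M \<xi> x) \<le> C * norm \<xi>" using H[unfolded hilbert_quasi_star_algebra_def, THEN conjunct2, THEN conjunct2, THEN conjunct2, THEN conjunct2, THEN conjunct2, THEN conjunct2, THEN conjunct2, THEN conjunct2, THEN conjunct2, THEN conjunct2, THEN conjunct2, THEN conjunct2, THEN conjunct2, THEN conjunct2, THEN conjunct2, THEN conjunct2, THEN conjunct2, THEN conjunct1] by blast
lemma multL_bd: "x \<in> A \<Longrightarrow> \<exists>C. \<forall>\<xi>. norm (M x \<xi>) \<le> C * norm \<xi>" using H[unfolded hilbert_quasi_star_algebra_def, THEN conjunct2, THEN conjunct2, THEN conjunct2, THEN conjunct2, THEN conjunct2, THEN conjunct2, THEN conjunct2, THEN conjunct2, THEN conjunct2, THEN conjunct2, THEN conjunct2, THEN conjunct2, THEN conjunct2, THEN conjunct2, THEN conjunct2, THEN conjunct2, THEN conjunct2, THEN conjunct2, THEN conjunct1] by blast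
lemma ax_ii: "x \<in> A \<Longrightarrow> y \<in> A \<Longrightarrow> z \<in> A \<Longrightarrow> P (M x y) z = P y (M (I x) z)"
  using H[unfolded hilbert_quasi_star_algebra_def, THEN conjunct2, THEN conjunct2, THEN conjunct2, THEN conjunct2, THEN conjunct2, THEN conjunct2, THEN conjunct2, THEN conjunct2, THEN conjunct2, THEN conjunct2, THEN conjunct2, THEN conjunct2, THEN conjunct2, THEN conjunct2, THEN conjunct2, THEN conjunct2, THEN conjunct2, THEN conjunct2, THEN conjunct2, THEN conjunct2, THEN conjunct1] by blast
lemma unitR[simp]: "M \<xi> e = \<xi>" using U unfolding hqa_unit_def by blast
lemma unitL[simp]: "M e \<xi> = \<xi>" using U unfolding hqa_unit_def by blast
lemma eA: "e \<in> A" using U unfolding hqa_unit_def by blast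

end


context hqa begin

lemma sc_zero[simp]: "sc 0 x = 0" using sc_real[of 0 x] by simp
lemma sc_m1: "sc (-1) x = - x" using sc_real[of "-1" x] by simp
lemma sc_scaleR: "sc (of_real r) x = scaleR r x" by (rule sc_real)

lemma ip_sc2: "P x (sc a y) = cnj a * P x y"
proof -
  have "P x (sc a y) = cnj (P (sc a y) x)" by (rule ip_cnj)
  also have "\<dots> = cnj a * cnj (P y x)" by (simp add: ip_sc1)
  also have "cnj (P y x) = P x y" using ip_cnj[of y x] by simp
  finally show ?thesis .
qed
lemma ip_add2: "P x (y + z) = P x y + P x z"
proof -
  have "P x (y + z) = cnj (P (y + z) x)" by (rule ip_cnj)
  also have "\<dots> = cnj (P y x) + cnj (P z x)" by (simp add: ip_add1)
  also have "cnj (P y x) = P x y" using ip_cnj[of y x] by simp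
  also have "cnj (P z x) = P x z" using ip_cnj[of z x] by simp
  finally show ?thesis .
qed
lemma ip_minus1: "P (- x) y = - P x y"
  using ip_sc1[of "-1" x y] by (simp add: sc_m1)
lemma ip_minus2: "P x (- y) = - P x y"
  using ip_sc2[of x "-1" y] by (simp add: sc_m1)
lemma ip_diff1: "P (x - y) z = P x z - P y z"
  using ip_add1[of x "-y" z] by (simp add: ip_minus1)
lemma ip_diff2: "P x (y - z) = P x y - P x z"
  using ip_add2[of x y "-z"] by (simp add: ip_minus2)
lemma ip_zero1[simp]: "P 0 y = 0" using ip_minus1[of 0 y] by simp
lemma ip_zero2[simp]: "P x 0 = 0" using ip_minus2[of x 0] by simp
lemma ip_scaleR1: "P (scaleR r x) y = scaleR r (P x y)"
  using ip_sc1[of "of_real r" x y] by (simp add: sc_real scaleR_conv_of_real)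
lemma ip_scaleR2: "P x (scaleR r y) = scaleR r (P x y)"
  using ip_sc2[of x "of_real r" y] by (simp add: sc_real scaleR_conv_of_real)

lemma ip_self: "P x x = of_real ((norm x)^2)"
proof -
  have "Im (P x x) = - Im (P x x)" using arg_cong[OF ip_cnj[of x x], of Im] by simp
  then have im: "Im (P x x) = 0" by simp
  have re: "Re (P x x) = (norm x)^2" using ip_norm[of x] ip_pos[of x] by simp
  show ?thesis by (simp add: complex_eq_iff im re)
qed

lemma CS: "norm (P x y) \<le> norm x * norm y"
proof (cases "y = 0")
  case True then show ?thesis by simp
next
  case False
  define n where "n = (norm y)^2"
  have n: "n > 0" using False by (simp add: n_def)
  define c where "c = P x y"
  define t where "t = c / of_real n"
  define z where "z = x - sc t y"
  have yx: "P y x = cnj c" unfolding c_def by (rule ip_cnj)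
  have yy: "P y y = of_real n" unfolding n_def by (rule ip_self)
  have n0: "(of_real n :: complex) \<noteq> 0" using n by simp
  have e1: "t * cnj c = c * cnj c / of_real n" unfolding t_def by simp
  have e2: "cnj t * c = c * cnj c / of_real n" unfolding t_def by simp
  have e3: "t * cnj t * P y y = c * cnj c / of_real n" unfolding t_def yy using n0
    by (simp add: power2_eq_square)
  have "P z z = P x x - P (sc t y) x - (P x (sc t y) - P (sc t y) (sc t y))"
    unfolding z_def by (simp only: ip_diff1 ip_diff2)
  also have "\<dots> = P x x - t * cnj c - cnj t * c + t * cnj t * P y y"
    by (simp add: ip_sc1 ip_sc2 yx c_def)
  also have "\<dots> = P x x - c * cnj c / of_real n"
    unfolding e1 e2 e3 by simp
  also have "\<dots> = of_real ((norm x)^2 - (norm c)^2 / n)"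
    by (simp add: ip_self flip: complex_norm_square)
  finally have "Re (P z z) = (norm x)^2 - (norm c)^2 / n" by simp
  then have "0 \<le> (norm x)^2 - (norm c)^2 / n" using ip_pos[of z] by simp
  then have "(norm c)^2 \<le> (norm x)^2 * n" using n by (simp add: field_simps)
  then have "(norm c)^2 \<le> (norm x * norm y)^2" by (simp add: n_def power_mult_distrib)
  then show ?thesis unfolding c_def by (rule power2_le_imp_le) simp
qed

end


context hqa begin

lemma inv_zero[simp]: "I 0 = 0"
proof -
  have h: "I 0 = I 0 + I 0" using inv_add[of 0 0] by (simp only: add_0)
  then show ?thesis by (simp only: add_cancel_right_right)
qed
lemma inv_minus: "I (- x) = - I x"
proof -
  have "I (-x) + I x = 0" by (metis inv_add inv_zero left_minus)
  then show ?thesis by (simp add: eq_neg_iff_add_eq_0)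
qed
lemma inv_diff: "I (x - y) = I x - I y"
  using inv_add[of x "-y"] by (simp add: inv_minus)

lemma inv_scaleR: "I (scaleR r x) = scaleR r (I x)"
  using inv_sc[of "of_real r" x] by (simp only: sc_real complex_cnj_complex_of_real)

lemma bl_inv: "bounded_linear I"
  by (rule bounded_linear_intro[where K=1]) (simp_all add: inv_add inv_scaleR)

lemma multR_scaleR: "a \<in> A \<Longrightarrow> M (scaleR r x) a = scaleR r (M x a)"
  using multR_sc[of a "of_real r" x] by (simp only: sc_real)
lemma multL_scaleR: "a \<in> A \<Longrightarrow> M a (scaleR r x) = scaleR r (M a x)"
  using multL_sc[of a "of_real r" x] by (simp only: sc_real)

lemma bl_multR: "a \<in> A \<Longrightarrow> bounded_linear (\<lambda>\<xi>. M \<xi> a)"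
proof -
  assume a: "a \<in> A"
  then obtain C where C: "\<And>\<xi>. norm (M \<xi> a) \<le> C * norm \<xi>" using multR_bd by blast
  have C': "\<And>\<xi>. norm (M \<xi> a) \<le> norm \<xi> * C" using C by (simp add: mult.commute)
  show ?thesis
    by (rule bounded_linear_intro[where K=C]) (simp_all only: multR_add[OF a] multR_scaleR[OF a] C')
qed

lemma bl_multL: "a \<in> A \<Longrightarrow> bounded_linear (\<lambda>\<xi>. M a \<xi>)"
proof -
  assume a: "a \<in> A"
  then obtain C where C: "\<And>\<xi>. norm (M a \<xi>) \<le> C * norm \<xi>" using multL_bd by blast
  have C': "\<And>\<xi>. norm (M a \<xi>) \<le> norm \<xi> * C" using C by (simp add: mult.commute)
  show ?thesis
    by (rule bounded_linear_intro[where K=C]) (simp_all only: multL_add[OF a] multL_scaleR[OF a] C')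
qed

lemma bl_ip1: "bounded_linear (\<lambda>x. P x y)"
  by (rule bounded_linear_intro[where K="norm y"])
     (simp_all add: ip_add1 ip_scaleR1 CS)

lemma CS2: "norm (P x y) \<le> norm y * norm x"
  using CS[of x y] by (simp add: mult.commute)

lemma bl_ip2: "bounded_linear (\<lambda>y. P x y)"
  by (rule bounded_linear_intro[where K="norm x"])
     (simp_all add: ip_add2 ip_scaleR2 CS2)

lemma cont_inv: "continuous_on UNIV I"
  by (rule linear_continuous_on[OF bl_inv])
lemma cont_multR: "a \<in> A \<Longrightarrow> continuous_on UNIV (\<lambda>\<xi>. M \<xi> a)"
  by (rule linear_continuous_on[OF bl_multR])
lemma cont_multL: "a \<in> A \<Longrightarrow> continuous_on UNIV (\<lambda>\<xi>. M a \<xi>)"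
  by (rule linear_continuous_on[OF bl_multL])
lemma cont_ip1: "continuous_on UNIV (\<lambda>x. P x y)"
  by (rule linear_continuous_on[OF bl_ip1])
lemma cont_ip2: "continuous_on UNIV (\<lambda>y. P x y)"
  by (rule linear_continuous_on[OF bl_ip2])

lemma dense_eq:
  fixes f g :: "'h \<Rightarrow> 'b::real_normed_vector"
  assumes "continuous_on UNIV f" "continuous_on UNIV g" "\<And>x. x \<in> A \<Longrightarrow> f x = g x"
  shows "f x = g x"
proof -
  have c: "continuous_on UNIV (\<lambda>x. f x - g x)" using assms(1,2) by (rule continuous_on_diff)
  have "closed {x \<in> UNIV. f x - g x = 0}"
    by (rule continuous_closed_preimage_constant[OF c closed_UNIV])
  moreover have "A \<subseteq> {x \<in> UNIV. f x - g x = 0}" using assms(3) by auto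
  ultimately have "closure A \<subseteq> {x \<in> UNIV. f x - g x = 0}" by (rule closure_minimal[rotated])
  then show ?thesis using dense by auto
qed

lemma dense_le:
  fixes f :: "'h \<Rightarrow> real"
  assumes "continuous_on UNIV f" "\<And>x. x \<in> A \<Longrightarrow> f x \<le> c"
  shows "f x \<le> c"
  using continuous_le_on_closure[of A f x c] assms dense by simp

lemma bound_from_dense:
  assumes K: "K \<ge> 0" and b: "\<And>w. w \<in> A \<Longrightarrow> norm (P x w) \<le> K * norm w"
  shows "norm x \<le> K"
proof -
  have c: "continuous_on UNIV (\<lambda>w. norm (P x w) - K * norm w)"
    by (intro continuous_on_diff continuous_on_norm cont_ip2 continuous_on_mult continuous_on_const continuous_on_id)
  have "norm (P x x) - K * norm x \<le> 0"
    by (rule dense_le[OF c]) (use b in auto)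
  then have "(norm x)^2 \<le> K * norm x" by (simp add: ip_self norm_power)
  then show ?thesis using K
    by (cases "norm x = 0") (auto simp: power2_eq_square)
qed

end


context hqa begin

lemma dense_eq_bl:
  fixes f g :: "'h \<Rightarrow> 'b::real_normed_vector"
  assumes "bounded_linear f" "bounded_linear g" "\<And>x. x \<in> A \<Longrightarrow> f x = g x"
  shows "f x = g x"
  by (rule dense_eq[OF linear_continuous_on[OF assms(1)] linear_continuous_on[OF assms(2)] assms(3)])

lemma A_minus: "b \<in> A \<Longrightarrow> - b \<in> A"
  using A_sc[of b "-1"] by (simp add: sc_m1)
lemma A_diff: "a \<in> A \<Longrightarrow> b \<in> A \<Longrightarrow> a - b \<in> A"
  using A_add[of a "-b"] A_minus by simp

lemma E1: "u \<in> A \<Longrightarrow> y \<in> A \<Longrightarrow> P (M \<xi> u) y = P u (M (I \<xi>) y)"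
  by (rule dense_eq_bl[where f="\<lambda>\<xi>. P (M \<xi> u) y" and g="\<lambda>\<xi>. P u (M (I \<xi>) y)"])
     (rule bounded_linear_compose[OF bl_ip1 bl_multR], assumption,
      rule bounded_linear_compose[OF bl_ip2 bounded_linear_compose[OF bl_multR bl_inv]], assumption,
      rule ax_ii)

lemma E4: "a \<in> A \<Longrightarrow> b \<in> A \<Longrightarrow> M \<xi> (a - b) = M \<xi> a - M \<xi> b"
proof -
  assume a: "a \<in> A" and b: "b \<in> A"
  show ?thesis
  proof (rule dense_eq_bl[where f="\<lambda>\<xi>. M \<xi> (a - b)" and g="\<lambda>\<xi>. M \<xi> a - M \<xi> b"])
    show "bounded_linear (\<lambda>\<xi>. M \<xi> (a - b))" by (rule bl_multR[OF A_diff[OF a b]])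
    show "bounded_linear (\<lambda>\<xi>. M \<xi> a - M \<xi> b)" by (rule bounded_linear_sub[OF bl_multR[OF a] bl_multR[OF b]])
    fix x assume x: "x \<in> A"
    have "M x (a - b) = M x (a + sc (-1) b)" by (simp add: sc_m1)
    also have "\<dots> = M x a - M x b" by (simp only: multL_add[OF x] multL_sc[OF x]) (simp add: sc_m1)
    finally show "M x (a - b) = M x a - M x b" .
  qed
qed

lemma E5: "a \<in> A \<Longrightarrow> x \<in> A \<Longrightarrow> M (M \<xi> a) x = M \<xi> (M a x)"
  by (rule dense_eq_bl[where f="\<lambda>\<xi>. M (M \<xi> a) x" and g="\<lambda>\<xi>. M \<xi> (M a x)"])
     (rule bounded_linear_compose[OF bl_multR bl_multR], assumption, assumption,
      rule bl_multR, rule A_mult, assumption, assumption, rule A_assoc)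

lemma E6: "a \<in> A \<Longrightarrow> b \<in> A \<Longrightarrow> M (a - b) \<xi> = M a \<xi> - M b \<xi>"
proof -
  assume a: "a \<in> A" and b: "b \<in> A"
  show ?thesis
  proof (rule dense_eq_bl[where f="\<lambda>\<xi>. M (a - b) \<xi>" and g="\<lambda>\<xi>. M a \<xi> - M b \<xi>"])
    show "bounded_linear (\<lambda>\<xi>. M (a - b) \<xi>)" by (rule bl_multL[OF A_diff[OF a b]])
    show "bounded_linear (\<lambda>\<xi>. M a \<xi> - M b \<xi>)" by (rule bounded_linear_sub[OF bl_multL[OF a] bl_multL[OF b]])
    fix x assume x: "x \<in> A"
    have "M (a - b) x = M (a + sc (-1) b) x" by (simp add: sc_m1)
    also have "\<dots> = M a x - M b x" by (simp only: multR_add[OF x] multR_sc[OF x]) (simp add: sc_m1)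
    finally show "M (a - b) x = M a x - M b x" .
  qed
qed

lemma E7: "a \<in> A \<Longrightarrow> x \<in> A \<Longrightarrow> M (M a \<xi>) x = M a (M \<xi> x)"
  by (rule dense_eq_bl[where f="\<lambda>\<xi>. M (M a \<xi>) x" and g="\<lambda>\<xi>. M a (M \<xi> x)"])
     (rule bounded_linear_compose[OF bl_multR bl_multL], assumption, assumption,
      rule bounded_linear_compose[OF bl_multL bl_multR], assumption, assumption, rule A_assoc)

lemma E8: "a \<in> A \<Longrightarrow> y \<in> A \<Longrightarrow> P (M a v) y = P v (M (I a) y)"
  by (rule dense_eq_bl[where f="\<lambda>v. P (M a v) y" and g="\<lambda>v. P v (M (I a) y)"])
     (rule bounded_linear_compose[OF bl_ip1 bl_multL], assumption, rule bl_ip1, rule ax_ii)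

lemma E9: "a \<in> A \<Longrightarrow> I (M a \<xi>) = M (I \<xi>) (I a)"
  by (rule dense_eq_bl[where f="\<lambda>\<xi>. I (M a \<xi>)" and g="\<lambda>\<xi>. M (I \<xi>) (I a)"])
     (rule bounded_linear_compose[OF bl_inv bl_multL], assumption,
      rule bounded_linear_compose[OF bl_multR bl_inv], rule A_inv, assumption, rule A_inv_mult)

end


context hqa begin

lemma ext_lemma:
  fixes f :: "'h \<Rightarrow> 'h"
  assumes K: "K \<ge> 0" and L: "\<And>a b. a \<in> A \<Longrightarrow> b \<in> A \<Longrightarrow> norm (f a - f b) \<le> K * norm (a - b)"
  obtains g where "continuous_on UNIV g" "\<And>a. a \<in> A \<Longrightarrow> g a = f a"
proof -
  have "K-lipschitz_on A f" by (rule lipschitz_onI) (use L K in \<open>auto simp: dist_norm\<close>)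
  then have "uniformly_continuous_on A f" by (rule lipschitz_on_uniformly_continuous)
  then obtain g where g: "uniformly_continuous_on (closure A) g" "\<And>x. x \<in> A \<Longrightarrow> f x = g x"
    by (rule uniformly_continuous_on_extension_on_closure) blast
  from g(1) have "continuous_on UNIV g" using dense uniformly_continuous_imp_continuous by fastforce
  with g(2) show ?thesis using that by metis
qed

lemma cont_comp:
  assumes "continuous_on UNIV g" "bounded_linear h"
  shows "continuous_on UNIV (\<lambda>x. h (g x))"
proof -
  have "continuous_on UNIV (h \<circ> g)"
    by (rule continuous_on_compose[OF assms(1)]) (rule linear_continuous_on[OF assms(2)])
  then show ?thesis by (simp add: o_def)
qed

lemma mult0: "M \<xi> 0 = 0"
  using E4[OF A0 A0, of \<xi>] by simp

lemma dirB:
  assumes b: "\<xi> \<in> bounded_elements S"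
  shows "left_multiplier S \<xi> \<eta>"
proof -
  obtain C where C: "\<And>x. x \<in> A \<Longrightarrow> norm (M \<xi> x) \<le> C * norm x"
    using b unfolding bounded_elements_def by blast
  have C': "norm (M \<xi> x) \<le> max C 0 * norm x" if "x \<in> A" for x
    using C[OF that] by (smt (verit) mult_right_mono norm_ge_zero)
  obtain g where gc: "continuous_on UNIV g" and ga: "\<And>a. a \<in> A \<Longrightarrow> g a = M \<xi> a"
  proof (rule ext_lemma[of "max C 0" "\<lambda>a. M \<xi> a"])
    fix a b assume a: "a \<in> A" and bb: "b \<in> A"
    show "norm (M \<xi> a - M \<xi> b) \<le> max C 0 * norm (a - b)"
      using C'[OF A_diff[OF a bb]] by (simp add: E4[OF a bb])
  qed auto
  show ?thesis unfolding left_multiplier_def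
  proof (intro exI[of _ "g \<eta>"] ballI)
    fix x y assume x: "x \<in> A" and y: "y \<in> A"
    show "P (M \<eta> x) (M (I \<xi>) y) = P (M (g \<eta>) x) y"
    proof (rule dense_eq[where f="\<lambda>\<eta>. P (M \<eta> x) (M (I \<xi>) y)" and g="\<lambda>\<eta>. P (M (g \<eta>) x) y"])
      show "continuous_on UNIV (\<lambda>\<eta>. P (M \<eta> x) (M (I \<xi>) y))"
        by (rule linear_continuous_on[OF bounded_linear_compose[OF bl_ip1 bl_multR[OF x]]])
      show "continuous_on UNIV (\<lambda>\<eta>. P (M (g \<eta>) x) y)"
        by (rule cont_comp[OF gc bounded_linear_compose[OF bl_ip1 bl_multR[OF x]]])
      fix a assume a: "a \<in> A"
      have "P (M (g a) x) y = P (M (M \<xi> a) x) y" by (simp add: ga[OF a])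
      also have "\<dots> = P (M \<xi> (M a x)) y" by (simp add: E5[OF a x])
      also have "\<dots> = P (M a x) (M (I \<xi>) y)" by (rule E1[OF A_mult[OF a x] y])
      finally show "P (M a x) (M (I \<xi>) y) = P (M (g a) x) y" by simp
    qed
  qed
qed

lemma dirA:
  assumes b: "\<xi> \<in> bounded_elements S"
  shows "left_multiplier S \<eta> \<xi>"
proof -
  obtain C0 where C0: "\<And>x. x \<in> A \<Longrightarrow> norm (M \<xi> x) \<le> C0 * norm x"
    using b unfolding bounded_elements_def by blast
  define C where "C = max C0 0"
  have C0': "C \<ge> 0" by (simp add: C_def)
  have C: "norm (M \<xi> x) \<le> C * norm x" if "x \<in> A" for x
    using C0[OF that] unfolding C_def by (smt (verit) mult_right_mono norm_ge_zero)
  have Cs: "norm (M (I \<xi>) y) \<le> C * norm y" if y: "y \<in> A" for y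
  proof (rule bound_from_dense)
    show "0 \<le> C * norm y" using C0' by simp
    fix w assume w: "w \<in> A"
    have "norm (P (M (I \<xi>) y) w) = norm (P w (M (I \<xi>) y))"
      by (metis complex_mod_cnj ip_cnj)
    also have "\<dots> = norm (P (M \<xi> w) y)" by (simp add: E1[OF w y])
    also have "\<dots> \<le> norm (M \<xi> w) * norm y" by (rule CS)
    also have "\<dots> \<le> C * norm w * norm y" by (intro mult_right_mono C w) simp
    finally show "norm (P (M (I \<xi>) y) w) \<le> C * norm y * norm w" by (simp add: ac_simps)
  qed
  have R: "norm (M a \<xi>) \<le> C * norm a" if a: "a \<in> A" for a
  proof -
    have "norm (M a \<xi>) = norm (I (M a \<xi>))" by simp
    also have "\<dots> = norm (M (I \<xi>) (I a))" by (simp add: E9[OF a])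
    also have "\<dots> \<le> C * norm (I a)" by (rule Cs[OF A_inv[OF a]])
    finally show ?thesis by simp
  qed
  obtain g where gc: "continuous_on UNIV g" and ga: "\<And>a. a \<in> A \<Longrightarrow> g a = M a \<xi>"
  proof (rule ext_lemma[of C "\<lambda>a. M a \<xi>"])
    fix a b assume a: "a \<in> A" and bb: "b \<in> A"
    show "norm (M a \<xi> - M b \<xi>) \<le> C * norm (a - b)"
      using R[OF A_diff[OF a bb]] by (simp add: E6[OF a bb])
  qed (use C0' in auto)
  show ?thesis unfolding left_multiplier_def
  proof (intro exI[of _ "g \<eta>"] ballI)
    fix x y assume x: "x \<in> A" and y: "y \<in> A"
    show "P (M \<xi> x) (M (I \<eta>) y) = P (M (g \<eta>) x) y"
    proof (rule dense_eq[where f="\<lambda>\<eta>. P (M \<xi> x) (M (I \<eta>) y)" and g="\<lambda>\<eta>. P (M (g \<eta>) x) y"])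
      show "continuous_on UNIV (\<lambda>\<eta>. P (M \<xi> x) (M (I \<eta>) y))"
        by (rule linear_continuous_on[OF bounded_linear_compose[OF bl_ip2 bounded_linear_compose[OF bl_multR[OF y] bl_inv]]])
      show "continuous_on UNIV (\<lambda>\<eta>. P (M (g \<eta>) x) y)"
        by (rule cont_comp[OF gc bounded_linear_compose[OF bl_ip1 bl_multR[OF x]]])
      fix a assume a: "a \<in> A"
      have "P (M (g a) x) y = P (M (M a \<xi>) x) y" by (simp add: ga[OF a])
      also have "\<dots> = P (M a (M \<xi> x)) y" by (simp add: E7[OF a x])
      also have "\<dots> = P (M \<xi> x) (M (I a) y)" by (rule E8[OF a y])
      finally show "P (M \<xi> x) (M (I a) y) = P (M (g a) x) y" by simp
    qed
  qed
qed

end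


context hqa begin

lemma dirC:
  assumes h: "\<forall>\<eta>. left_multiplier S \<eta> \<xi>"
  shows "\<xi> \<in> bounded_elements S"
proof -
  have "\<forall>\<eta>. \<exists>\<zeta>. \<forall>x\<in>A. \<forall>y\<in>A. P (M \<xi> x) (M (I \<eta>) y) = P (M \<zeta> x) y"
    using h unfolding left_multiplier_def by blast
  then obtain T where T: "\<forall>\<eta>. \<forall>x\<in>A. \<forall>y\<in>A. P (M \<xi> x) (M (I \<eta>) y) = P (M (T \<eta>) x) y"
    using choice[of "\<lambda>\<eta> \<zeta>. \<forall>x\<in>A. \<forall>y\<in>A. P (M \<xi> x) (M (I \<eta>) y) = P (M \<zeta> x) y"] by blast
  have claim: "norm (P (M \<xi> x) (I \<eta>)) \<le> norm (T \<eta>) * norm x" if x: "x \<in> A" for x \<eta>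
  proof -
    have "P (M \<xi> x) (I \<eta>) = P (M \<xi> x) (M (I \<eta>) e)" by simp
    also have "\<dots> = P (M (T \<eta>) x) e" using T x eA by blast
    also have "\<dots> = P x (M (I (T \<eta>)) e)" by (rule E1[OF x eA])
    also have "\<dots> = P x (I (T \<eta>))" by simp
    finally have "norm (P (M \<xi> x) (I \<eta>)) = norm (P x (I (T \<eta>)))" by simp
    also have "\<dots> \<le> norm x * norm (T \<eta>)" using CS[of x "I (T \<eta>)"] by simp
    finally show ?thesis by (simp add: ac_simps)
  qed
  define f where "f = (\<lambda>x \<eta>. (1 / norm x) *\<^sub>R P (M \<xi> x) (I \<eta>))"
  have "\<exists>C. \<forall>x\<in>A - {0}. \<forall>\<eta>. norm (f x \<eta>) \<le> C * norm \<eta>"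
  proof (rule ubp)
    fix x assume x: "x \<in> A - {0}"
    show "bounded_linear (f x)" unfolding f_def
      by (rule bounded_linear_const_scaleR[OF bounded_linear_compose[OF bl_ip2 bl_inv]])
  next
    fix \<eta>
    show "\<exists>B. \<forall>x\<in>A - {0}. norm (f x \<eta>) \<le> B"
    proof (intro exI ballI)
      fix x assume x: "x \<in> A - {0}"
      then have nx: "norm x > 0" by simp
      have "norm (f x \<eta>) = norm (P (M \<xi> x) (I \<eta>)) / norm x" by (simp add: f_def)
      also have "\<dots> \<le> norm (T \<eta>) * norm x / norm x"
        using claim[of x \<eta>] x nx by (intro divide_right_mono) auto
      also have "\<dots> = norm (T \<eta>)" using nx by simp
      finally show "norm (f x \<eta>) \<le> norm (T \<eta>)" .
    qed
  qed
  then obtain C1 where C1: "\<And>x \<eta>. x \<in> A - {0} \<Longrightarrow> norm (f x \<eta>) \<le> C1 * norm \<eta>" by blast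
  define C where "C = max C1 0"
  have "norm (M \<xi> x) \<le> C * norm x" if x: "x \<in> A" for x
  proof (cases "x = 0")
    case True then show ?thesis by (simp add: mult0)
  next
    case False
    then have nx: "norm x > 0" by simp
    define v where "v = M \<xi> x"
    have "norm (f x (I v)) = (norm v)^2 / norm x"
      by (simp add: f_def v_def ip_self norm_power)
    moreover have "norm (f x (I v)) \<le> C1 * norm v" using C1[of x "I v"] x False by simp
    ultimately have "(norm v)^2 \<le> C1 * norm v * norm x" using nx by (simp add: field_simps)
    also have "\<dots> \<le> C * norm v * norm x" unfolding C_def
      by (intro mult_right_mono) auto
    finally have "(norm v)^2 \<le> C * norm x * norm v" by (simp add: ac_simps)
    then have "norm v \<le> C * norm x"
      by (cases "norm v = 0") (auto simp: C_def power2_eq_square)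
    then show ?thesis by (simp add: v_def)
  qed
  then show ?thesis unfolding bounded_elements_def by blast
qed

lemma dirD:
  assumes h: "\<forall>\<eta>. left_multiplier S \<xi> \<eta>"
  shows "\<xi> \<in> bounded_elements S"
proof -
  have "\<forall>\<eta>. \<exists>\<zeta>. \<forall>x\<in>A. \<forall>y\<in>A. P (M \<eta> x) (M (I \<xi>) y) = P (M \<zeta> x) y"
    using h unfolding left_multiplier_def by blast
  then obtain T where T: "\<forall>\<eta>. \<forall>x\<in>A. \<forall>y\<in>A. P (M \<eta> x) (M (I \<xi>) y) = P (M (T \<eta>) x) y"
    using choice[of "\<lambda>\<eta> \<zeta>. \<forall>x\<in>A. \<forall>y\<in>A. P (M \<eta> x) (M (I \<xi>) y) = P (M \<zeta> x) y"] by blast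
  have claim: "norm (P \<eta> (M (I \<xi>) y)) \<le> norm (T \<eta>) * norm y" if y: "y \<in> A" for y \<eta>
  proof -
    have "P \<eta> (M (I \<xi>) y) = P (M \<eta> e) (M (I \<xi>) y)" by simp
    also have "\<dots> = P (M (T \<eta>) e) y" using T y eA by blast
    finally have "P \<eta> (M (I \<xi>) y) = P (T \<eta>) y" by simp
    then show ?thesis using CS[of "T \<eta>" y] by simp
  qed
  define f where "f = (\<lambda>y \<eta>. (1 / norm y) *\<^sub>R P \<eta> (M (I \<xi>) y))"
  have "\<exists>C. \<forall>y\<in>A - {0}. \<forall>\<eta>. norm (f y \<eta>) \<le> C * norm \<eta>"
  proof (rule ubp)
    fix y assume y: "y \<in> A - {0}"
    show "bounded_linear (f y)" unfolding f_def
      by (rule bounded_linear_const_scaleR[OF bl_ip1])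
  next
    fix \<eta>
    show "\<exists>B. \<forall>y\<in>A - {0}. norm (f y \<eta>) \<le> B"
    proof (intro exI ballI)
      fix y assume y: "y \<in> A - {0}"
      then have ny: "norm y > 0" by simp
      have "norm (f y \<eta>) = norm (P \<eta> (M (I \<xi>) y)) / norm y" by (simp add: f_def)
      also have "\<dots> \<le> norm (T \<eta>) * norm y / norm y"
        using claim[of y \<eta>] y ny by (intro divide_right_mono) auto
      also have "\<dots> = norm (T \<eta>)" using ny by simp
      finally show "norm (f y \<eta>) \<le> norm (T \<eta>)" .
    qed
  qed
  then obtain C1 where C1: "\<And>y \<eta>. y \<in> A - {0} \<Longrightarrow> norm (f y \<eta>) \<le> C1 * norm \<eta>" by blast
  define C where "C = max C1 0"
  have C0: "C \<ge> 0" by (simp add: C_def)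
  have bnd: "norm (P \<eta> (M (I \<xi>) y)) \<le> C * norm \<eta> * norm y" if y: "y \<in> A" for y \<eta>
  proof (cases "y = 0")
    case True then show ?thesis by (simp add: mult0)
  next
    case False
    then have ny: "norm y > 0" by simp
    have "norm (P \<eta> (M (I \<xi>) y)) / norm y \<le> C1 * norm \<eta>"
      using C1[of y \<eta>] y False by (simp add: f_def)
    then have "norm (P \<eta> (M (I \<xi>) y)) \<le> C1 * norm \<eta> * norm y" using ny by (simp add: field_simps)
    also have "\<dots> \<le> C * norm \<eta> * norm y" unfolding C_def
      by (intro mult_right_mono) auto
    finally show ?thesis .
  qed
  have "norm (M \<xi> x) \<le> C * norm x" if x: "x \<in> A" for x
  proof (rule bound_from_dense)
    show "0 \<le> C * norm x" using C0 by simp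
    fix w assume w: "w \<in> A"
    have "norm (P (M \<xi> x) w) = norm (P x (M (I \<xi>) w))" by (simp add: E1[OF x w])
    also have "\<dots> \<le> C * norm x * norm w" by (rule bnd[OF w])
    finally show "norm (P (M \<xi> x) w) \<le> C * norm x * norm w" .
  qed
  then show ?thesis unfolding bounded_elements_def by blast
qed

theorem main:
  "bounded_elements S = {\<xi>. \<forall>\<eta>. left_multiplier S \<eta> \<xi>} \<and>
   bounded_elements S = {\<xi>. \<forall>\<eta>. left_multiplier S \<xi> \<eta>}"
  using dirA dirB dirC dirD by blast

end

theorem mainTheorem10:
  fixes S :: "('h::banach) hqa_data" and e :: 'h
  assumes "hilbert_quasi_star_algebra S"
    and "hqa_unit S e"
  shows "bounded_elements S = {\<xi>. \<forall>\<eta>. left_multiplier S \<eta> \<xi>} \<and>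
         bounded_elements S = {\<xi>. \<forall>\<eta>. left_multiplier S \<xi> \<eta>}"
proof -
  interpret hqa S e using assms by unfold_locales
  show ?thesis by (rule main)
qed


end
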